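(* Let $n\ge2$, $M$ a nonderogatory $d\times d$ matrix with minimal polynomial $\mathbf p$, and $\mathcal B$ a generic maximal subalgebra of $\mathcal T_{n,d}[\mathcal P(M)]$, with $\mathbf s_+,\mathbf s_-$ as defined below. Let $A\in\mathcal B$ and polynomials $\tilde{\mathbf a}_j$, each relatively prime to $\mathbf p$, satisfy $A_j=\mathbf s_+(M)\tilde{\mathbf a}_j(M)$ for $j\ge1$ and $A_j=\mathbf s_-(M)\tilde{\mathbf a}_j(M)$ for $j\le-1$; let $\boldsymbol\gamma_1\in\mathbb C[X]$ be such that $\mathbf p$ divides $\boldsymbol\gamma_1\tilde{\mathbf a}_{1-n}-1$, and put $\boldsymbol\xi=\tilde{\mathbf a}_1\boldsymbol\gamma_1$. Then $\mathcal B=\mathfrak B(\mathbf s_+,\mathbf s_-,\boldsymbol\xi)$.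
   Context: A nonderogatory matrix is one whose minimal polynomial equals its characteristic polynomial; $\mathcal P(M)$ is the algebra of polynomials in $M$; $\mathcal T_{n,d}[\mathcal P(M)]$ is the set of $n\times n$ block Toeplitz matrices $(B_{i-j})_{i,j=0}^{n-1}$ with all $B_m\in\mathcal P(M)$. A maximal subalgebra of $\mathcal T_{n,d}[\mathcal P(M)]$ is a subalgebra contained in it, maximal under inclusion; it is generic if it is contained neither in the set of such matrices with $B_i=0$ for all $i\ge1$ nor in the set with $B_i=0$ for all $i\le-1$. For $B\in\mathcal B$ write $B_j=\mathbf b_j(M)$; $\mathbf s_+$ is the greatest common divisor of $\mathbf p$ and all $\mathbf b_j$ with $j\ge1$, $B\in\mathcal B$, and $\mathbf s_-$ that of $\mathbf p$ and all $\mathbf b_j$ with $j\le-1$, $B\in\mathcal B$ (one has $\mathbf s_+\mathbf s_-\mid\mathbf p$, and such an $A$ exists). For $\mathbf p_+,\mathbf p_-,\boldsymbol\chi$ with $\mathbf p_+\mathbf p_-\mid\mathbf p$ and $\boldsymbol\chi$ coprime to $\mathbf p$, and $\mathbf q=\mathbf p/(\mathbf p_+\mathbf p_-)$, $\mathfrak B(\mathbf p_+,\mathbf p_-,\boldsymbol\chi)$ is the set of block Toeplitz matrices $A=(A_{i-j})$ with all $A_i\in\mathcal P(M)$ such that for each $i=1,\dots,n-1$ there are polynomials $\mathbf a_i,\mathbf a_{i-n}$ with $A_i=\mathbf p_+(M)\mathbf a_i(M)$, $A_{i-n}=\mathbf p_-(M)\mathbf a_{i-n}(M)$ and $\mathbf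 q\mid\mathbf a_i-\boldsymbol\chi\mathbf a_{i-n}$. *)

theory Defs
  imports "Jordan_Normal_Form.Char_Poly" "HOL-Computational_Algebra.Computational_Algebra" "HOL-Computational_Algebra.Field_as_Ring"
begin

definition poly_mat :: "complex poly \<Rightarrow> complex mat \<Rightarrow> complex mat" where
  "poly_mat q M = mat (dim_row M) (dim_col M)
     (\<lambda>(k,l). \<Sum>i\<le>degree q. coeff q i * (M ^\<^sub>m i) $$ (k,l))"

definition is_min_poly :: "complex mat \<Rightarrow> complex poly \<Rightarrow> bool" where
  "is_min_poly M p \<longleftrightarrow> monic p \<and> poly_mat p M = 0\<^sub>m (dim_row M) (dim_col M) \<and>
     (\<forall>q. poly_mat q M = 0\<^sub>m (dim_row M) (dim_col M) \<longrightarrow> p dvd q)"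

definition nonderogatory :: "complex mat \<Rightarrow> bool" where
  "nonderogatory M \<longleftrightarrow> (\<exists>p. is_min_poly M p \<and> p = char_poly M)"

definition polys_in :: "complex mat \<Rightarrow> complex mat set" where
  "polys_in M = {poly_mat q M | q. True}"

definition blk :: "nat \<Rightarrow> complex mat \<Rightarrow> nat \<Rightarrow> nat \<Rightarrow> complex mat" where
  "blk d A i j = mat d d (\<lambda>(k,l). A $$ (i*d+k, j*d+l))"

text \<open>The Toeplitz coefficient A_m (m in {1-n..n-1}) of a block Toeplitz matrix:
  A_m is the block in position (i,j) with i-j=m.\<close>
definition tcoef :: "nat \<Rightarrow> complex mat \<Rightarrow> int \<Rightarrow> complex mat" where
  "tcoef d A m = (if m \<ge> 0 then blk d A (nat m) 0 else blk d A 0 (nat (-m)))"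

definition block_toeplitz :: "nat \<Rightarrow> nat \<Rightarrow> complex mat \<Rightarrow> complex mat set" where
  "block_toeplitz n d M = {A. A \<in> carrier_mat (n*d) (n*d) \<and>
     (\<exists>B :: int \<Rightarrow> complex mat. (\<forall>m. 1 - int n \<le> m \<and> m \<le> int n - 1 \<longrightarrow> B m \<in> polys_in M) \<and>
        (\<forall>i<n. \<forall>j<n. \<forall>k<d. \<forall>l<d. A $$ (i*d+k, j*d+l) = B (int i - int j) $$ (k,l)))}"

definition subalgebra :: "nat \<Rightarrow> complex mat set \<Rightarrow> bool" where
  "subalgebra N S \<longleftrightarrow> S \<subseteq> carrier_mat N N \<and> 0\<^sub>m N N \<in> S \<and>
     (\<forall>A\<in>S. \<forall>B\<in>S. A + B \<in> S \<and> A * B \<in> S) \<and> (\<forall>c. \<forall>A\<in>S. c \<cdot>\<^sub>m A \<in> S)"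

definition maximal_subalgebra :: "nat \<Rightarrow> nat \<Rightarrow> complex mat \<Rightarrow> complex mat set \<Rightarrow> bool" where
  "maximal_subalgebra n d M S \<longleftrightarrow> subalgebra (n*d) S \<and> S \<subseteq> block_toeplitz n d M \<and>
     (\<forall>S'. subalgebra (n*d) S' \<and> S \<subseteq> S' \<and> S' \<subseteq> block_toeplitz n d M \<longrightarrow> S' = S)"

definition generic_maximal_subalgebra :: "nat \<Rightarrow> nat \<Rightarrow> complex mat \<Rightarrow> complex mat set \<Rightarrow> bool" where
  "generic_maximal_subalgebra n d M S \<longleftrightarrow> maximal_subalgebra n d M S \<and>
     \<not> S \<subseteq> {A \<in> block_toeplitz n d M. \<forall>i. 1 \<le> i \<and> i \<le> int n - 1 \<longrightarrow> tcoef d A i = 0\<^sub>m d d} \<and>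
     \<not> S \<subseteq> {A \<in> block_toeplitz n d M. \<forall>i. 1 - int n \<le> i \<and> i \<le> -1 \<longrightarrow> tcoef d A i = 0\<^sub>m d d}"

text \<open>s_+ and s_-: gcd of p and all b_j (B_j = b_j(M)) with j >= 1 resp. j <= -1, B in S.
  All representatives b_j are included; since they differ by multiples of p this is the same gcd.\<close>
definition s_plus :: "nat \<Rightarrow> nat \<Rightarrow> complex mat \<Rightarrow> complex poly \<Rightarrow> complex mat set \<Rightarrow> complex poly" where
  "s_plus n d M p S = Gcd (insert p {b. \<exists>B\<in>S. \<exists>j. 1 \<le> j \<and> j \<le> int n - 1 \<and> tcoef d B j = poly_mat b M})"

definition s_minus :: "nat \<Rightarrow> nat \<Rightarrow> complex mat \<Rightarrow> complex poly \<Rightarrow> complex mat set \<Rightarrow> complex poly" where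
  "s_minus n d M p S = Gcd (insert p {b. \<exists>B\<in>S. \<exists>j. 1 - int n \<le> j \<and> j \<le> -1 \<and> tcoef d B j = poly_mat b M})"

definition frakB :: "nat \<Rightarrow> nat \<Rightarrow> complex mat \<Rightarrow> complex poly \<Rightarrow> complex poly \<Rightarrow> complex poly \<Rightarrow> complex poly
    \<Rightarrow> complex mat set" where
  "frakB n d M p pp pm chi = {A \<in> block_toeplitz n d M.
     \<forall>i. 1 \<le> i \<and> i \<le> int n - 1 \<longrightarrow>
       (\<exists>ai aim. tcoef d A i = poly_mat pp M * poly_mat ai M \<and>
                 tcoef d A (i - int n) = poly_mat pm M * poly_mat aim M \<and>
                 (p div (pp * pm)) dvd (ai - chi * aim))}"

end

theory Submission
  imports Defs
begin

locale tp =
  fixes n d :: nat and M :: "complex mat" and p :: "complex poly"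
  assumes n2: "n \<ge> 2" and d1: "d \<ge> 1" and Mc: "M \<in> carrier_mat d d" and mp: "is_min_poly M p"
begin

abbreviation ev where "ev q \<equiv> poly_mat q M"

lemma ev_carrier[simp]: "ev q \<in> carrier_mat d d"
  using Mc unfolding poly_mat_def carrier_mat_def by simp

lemma ev_dims[simp]: "dim_row (ev q) = d" "dim_col (ev q) = d"
  using Mc unfolding poly_mat_def carrier_mat_def by simp_all

lemma ev_entry: assumes "degree q < N" "k < d" "l < d"
  shows "ev q $$ (k,l) = (\<Sum>i<N. coeff q i * (M ^\<^sub>m i) $$ (k,l))"
proof -
  have "ev q $$ (k,l) = (\<Sum>i\<le>degree q. coeff q i * (M ^\<^sub>m i) $$ (k,l))"
    using Mc assms unfolding poly_mat_def by auto
  also have "\<dots> = (\<Sum>i<N. coeff q i * (M ^\<^sub>m i) $$ (k,l))"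
    by (rule sum.mono_neutral_left) (use assms in \<open>auto simp: coeff_eq_0\<close>)
  finally show ?thesis .
qed

lemma ev_add: "ev (f + g) = ev f + ev g"
proof (rule eq_matI)
  fix k l assume kl: "k < dim_row (ev f + ev g)" "l < dim_col (ev f + ev g)"
  define N where "N = Suc (max (degree f) (degree g))"
  have h: "degree (f+g) < N" "degree f < N" "degree g < N" using degree_add_le_max[of f g]
    unfolding N_def by auto
  show "ev (f + g) $$ (k, l) = (ev f + ev g) $$ (k, l)"
    using kl by (simp add: ev_entry[OF h(1)] ev_entry[OF h(2)] ev_entry[OF h(3)]
        sum.distrib[symmetric] distrib_right)
qed auto

lemma ev_diff: "ev (f - g) = ev f - ev g"
proof (rule eq_matI)
  fix k l assume kl: "k < dim_row (ev f - ev g)" "l < dim_col (ev f - ev g)"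
  define N where "N = Suc (max (degree f) (degree g))"
  have h: "degree (f-g) < N" "degree f < N" "degree g < N" using Polynomial.degree_diff_le_max[of f g]
    unfolding N_def by auto
  show "ev (f - g) $$ (k, l) = (ev f - ev g) $$ (k, l)"
    using kl by (simp add: ev_entry[OF h(1)] ev_entry[OF h(2)] ev_entry[OF h(3)]
        sum_subtractf[symmetric] left_diff_distrib)
qed auto

lemma ev_smult: "ev (Polynomial.smult c f) = c \<cdot>\<^sub>m ev f"
proof (rule eq_matI)
  fix k l assume kl: "k < dim_row (c \<cdot>\<^sub>m ev f)" "l < dim_col (c \<cdot>\<^sub>m ev f)"
  define N where "N = Suc (degree f)"
  have h: "degree (Polynomial.smult c f) < N" "degree f < N" unfolding N_def by auto
  show "ev (Polynomial.smult c f) $$ (k, l) = (c \<cdot>\<^sub>m ev f) $$ (k, l)"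
    using kl by (simp add: ev_entry[OF h(1)] ev_entry[OF h(2)] sum_distrib_left mult.assoc)
qed auto

lemma ev_0: "ev 0 = 0\<^sub>m d d"
  by (rule eq_matI) (auto simp: ev_entry[of 0 1])

lemma ev_pCons: "ev (pCons a f) = a \<cdot>\<^sub>m 1\<^sub>m d + M * ev f"
proof (rule eq_matI)
  fix k l assume kl: "k < dim_row (a \<cdot>\<^sub>m 1\<^sub>m d + M * ev f)" "l < dim_col (a \<cdot>\<^sub>m 1\<^sub>m d + M * ev f)"
  hence kl: "k < d" "l < d" using Mc by auto
  define N where "N = Suc (degree f)"
  have h: "degree (pCons a f) < Suc N" "degree f < N" unfolding N_def by (auto simp: degree_pCons_le)
  have pw: "M ^\<^sub>m Suc i = M * M ^\<^sub>m i" for i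
  proof (induct i)
    case 0 then show ?case using Mc by simp
  next
    case (Suc i)
    have "M ^\<^sub>m Suc (Suc i) = (M * M ^\<^sub>m i) * M" using Suc by simp
    also have "\<dots> = M * (M ^\<^sub>m i * M)" using Mc by (simp add: assoc_mult_mat[of _ d d _ d _ d])
    finally show ?case by simp
  qed
  have "(M * ev f) $$ (k,l) = (\<Sum>r<d. M $$ (k,r) * ev f $$ (r,l))"
    using Mc kl by (simp add: scalar_prod_def atLeast0LessThan)
  also have "\<dots> = (\<Sum>r<d. \<Sum>i<N. M $$ (k,r) * (coeff f i * (M ^\<^sub>m i) $$ (r,l)))"
    by (rule sum.cong, simp, simp add: ev_entry[OF h(2)] kl sum_distrib_left)
  also have "\<dots> = (\<Sum>i<N. coeff f i * (\<Sum>r<d. M $$ (k,r) * (M ^\<^sub>m i) $$ (r,l)))"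
    by (subst sum.swap) (simp add: sum_distrib_left mult_ac)
  also have "\<dots> = (\<Sum>i<N. coeff f i * (M ^\<^sub>m Suc i) $$ (k,l))"
    unfolding pw using Mc kl by (simp add: scalar_prod_def atLeast0LessThan)
  finally have e: "(M * ev f) $$ (k,l) = (\<Sum>i<N. coeff f i * (M ^\<^sub>m Suc i) $$ (k,l))" .
  have "ev (pCons a f) $$ (k,l) = coeff (pCons a f) 0 * (M ^\<^sub>m 0) $$ (k,l)
     + (\<Sum>i<N. coeff (pCons a f) (Suc i) * (M ^\<^sub>m Suc i) $$ (k,l))"
    by (subst ev_entry[OF h(1) kl]) (rule sum.lessThan_Suc_shift)
  then show "ev (pCons a f) $$ (k, l) = (a \<cdot>\<^sub>m 1\<^sub>m d + M * ev f) $$ (k, l)"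
    using kl Mc e by (simp del: pow_mat.simps(2))
qed (use Mc in auto)

lemma smult0_one: "(0::complex) \<cdot>\<^sub>m 1\<^sub>m d = 0\<^sub>m d d" by (rule eq_matI) auto

lemma ev_pCons0: "ev (pCons 0 f) = M * ev f"
proof -
  have c: "M * ev f \<in> carrier_mat d d" using Mc by (simp add: mult_carrier_mat[of _ d d _ d])
  have "ev (pCons 0 f) = 0\<^sub>m d d + M * ev f" unfolding ev_pCons smult0_one ..
  also have "\<dots> = M * ev f" using c by simp
  finally show ?thesis .
qed

lemma ev_mult: "ev (f * g) = ev f * ev g"
proof (induct f rule: pCons_induct)
  case 0
  have "(0::complex) \<cdot>\<^sub>m 1\<^sub>m d = 0\<^sub>m d d" by (rule eq_matI) auto
  then show ?case by (simp add: ev_0)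
next
  case (pCons a f)
  have "ev (pCons a f * g) = ev (Polynomial.smult a g + pCons 0 (f * g))" by simp
  also have "\<dots> = a \<cdot>\<^sub>m ev g + M * (ev f * ev g)"
    by (simp only: ev_add ev_smult ev_pCons0 pCons.hyps)
  also have "\<dots> = (a \<cdot>\<^sub>m 1\<^sub>m d + M * ev f) * ev g"
    using Mc by (simp add: add_mult_distrib_mat[of _ d d _ _ d] mult_smult_assoc_mat[of _ d d _ d]
       assoc_mult_mat[of _ d d _ d _ d])
  finally show ?case by (simp add: ev_pCons)
qed

lemma p_nz: "p \<noteq> 0" using mp unfolding is_min_poly_def by auto

lemma ev_p: "ev p = 0\<^sub>m d d" using mp Mc unfolding is_min_poly_def by auto

lemma ev_eq_iff: "ev f = ev g \<longleftrightarrow> p dvd f - g"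
proof
  assume "ev f = ev g"
  hence "ev (f - g) = 0\<^sub>m d d" by (simp add: ev_diff minus_r_inv_mat[of _ d d])
  thus "p dvd f - g" using mp Mc unfolding is_min_poly_def by auto
next
  assume "p dvd f - g"
  then obtain h where h: "f - g = p * h" by (auto elim: dvdE)
  have "ev (f - g) = 0\<^sub>m d d" unfolding h ev_mult ev_p by simp
  hence "ev f - ev g = 0\<^sub>m d d" by (simp add: ev_diff)
  show "ev f = ev g"
  proof (rule eq_matI)
    fix k l assume "k < dim_row (ev g)" "l < dim_col (ev g)"
    then have "(ev f - ev g) $$ (k,l) = 0" using \<open>ev f - ev g = 0\<^sub>m d d\<close> by simp
    then show "ev f $$ (k,l) = ev g $$ (k,l)" using \<open>k < dim_row (ev g)\<close> \<open>l < dim_col (ev g)\<close> by simp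
  qed simp_all
qed

lemma ev_sum_entry: "finite A \<Longrightarrow> k < d \<Longrightarrow> l < d \<Longrightarrow>
  ev (\<Sum>t\<in>A. f t) $$ (k,l) = (\<Sum>t\<in>A. ev (f t) $$ (k,l))"
  by (induct A rule: finite_induct) (auto simp: ev_0 ev_add)


definition toep :: "(int \<Rightarrow> complex poly) \<Rightarrow> complex mat" where
  "toep c = mat (n*d) (n*d) (\<lambda>(r,s). ev (c (int (r div d) - int (s div d))) $$ (r mod d, s mod d))"

lemma idx_lt: "i < n \<Longrightarrow> k < d \<Longrightarrow> i*d+k < n*d"
proof -
  assume "i < n" "k < d"
  hence "i*d+k < i*d+d" by simp
  also have "\<dots> = Suc i * d" by simp
  also have "\<dots> \<le> n*d" using \<open>i<n\<close> by (intro mult_le_mono1) simp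
  finally show ?thesis .
qed

lemma idx_div: "k < d \<Longrightarrow> (i*d+k) div d = i" using d1 by simp
lemma idx_mod: "k < d \<Longrightarrow> (i*d+k) mod d = k" using d1 by simp

lemma toep_carrier[simp]: "toep c \<in> carrier_mat (n*d) (n*d)"
  unfolding toep_def carrier_mat_def by simp

lemma toep_dims[simp]: "dim_row (toep c) = n*d" "dim_col (toep c) = n*d"
  unfolding toep_def by simp_all

lemma toep_entry: "i < n \<Longrightarrow> j < n \<Longrightarrow> k < d \<Longrightarrow> l < d \<Longrightarrow>
   toep c $$ (i*d+k, j*d+l) = ev (c (int i - int j)) $$ (k,l)"
  unfolding toep_def using idx_lt[of i k] idx_lt[of j l] by (simp add: idx_div idx_mod)

lemma split_idx: "r < n*d \<Longrightarrow> r = (r div d)*d + r mod d \<and> r div d < n \<and> r mod d < d"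
  using d1 by (auto simp: less_mult_imp_div_less)

lemma mat_eq_blocks:
  assumes X: "X \<in> carrier_mat (n*d) (n*d)" and Y: "Y \<in> carrier_mat (n*d) (n*d)"
    and h: "\<And>i j k l. i < n \<Longrightarrow> j < n \<Longrightarrow> k < d \<Longrightarrow> l < d \<Longrightarrow> X $$ (i*d+k, j*d+l) = Y $$ (i*d+k, j*d+l)"
  shows "X = Y"
proof (rule eq_matI)
  fix r s assume rs: "r < dim_row Y" "s < dim_col Y"
  hence r: "r < n*d" and s: "s < n*d" using Y by auto
  show "X $$ (r, s) = Y $$ (r, s)"
    using h[of "r div d" "s div d" "r mod d" "s mod d"] split_idx[OF r] split_idx[OF s] by metis
qed (use X Y in auto)

lemma blk_eq: assumes "X \<in> carrier_mat (n*d) (n*d)" "E \<in> carrier_mat d d"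
  "\<And>k l. k < d \<Longrightarrow> l < d \<Longrightarrow> X $$ (i*d+k, j*d+l) = E $$ (k,l)"
  shows "blk d X i j = E"
  unfolding blk_def by (rule eq_matI) (use assms in auto)

lemma blk_toep: "i < n \<Longrightarrow> j < n \<Longrightarrow> blk d (toep c) i j = ev (c (int i - int j))"
  by (rule blk_eq) (simp_all add: toep_entry)

lemma tcoef_toep: assumes "1 - int n \<le> m" "m \<le> int n - 1"
  shows "tcoef d (toep c) m = ev (c m)"
proof (cases "m \<ge> 0")
  case True
  hence "nat m < n" using assms by auto
  then show ?thesis using True blk_toep[of "nat m" 0 c] n2 unfolding tcoef_def by simp
next
  case False
  hence "nat (-m) < n" using assms by auto
  then show ?thesis using False blk_toep[of 0 "nat (-m)" c] n2 unfolding tcoef_def by simp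
qed

abbreviation T where "T \<equiv> block_toeplitz n d M"

lemma toep_T: "toep c \<in> T"
  unfolding block_toeplitz_def polys_in_def
  by (auto intro!: exI[of _ "\<lambda>m. ev (c m)"] simp: toep_entry)

lemma T_toep: assumes "X \<in> T" shows "\<exists>c. X = toep c"
proof -
  from assms obtain B where X: "X \<in> carrier_mat (n*d) (n*d)"
    and B: "\<forall>m. 1 - int n \<le> m \<and> m \<le> int n - 1 \<longrightarrow> B m \<in> polys_in M"
    and e: "\<forall>i<n. \<forall>j<n. \<forall>k<d. \<forall>l<d. X $$ (i*d+k, j*d+l) = B (int i - int j) $$ (k,l)"
    unfolding block_toeplitz_def by blast
  define c where "c m = (SOME q. B m = ev q)" for m
  have c: "B m = ev (c m)" if "1 - int n \<le> m" "m \<le> int n - 1" for m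
  proof -
    have "\<exists>q. B m = ev q" using B that unfolding polys_in_def by auto
    thus ?thesis unfolding c_def by (rule someI_ex)
  qed
  have "X = toep c"
  proof (rule mat_eq_blocks[OF X toep_carrier])
    fix i j k l assume "i < n" "j < n" "k < d" "l < d"
    then show "X $$ (i*d+k, j*d+l) = toep c $$ (i*d+k, j*d+l)"
      using e c[of "int i - int j"] by (simp add: toep_entry)
  qed
  thus ?thesis by blast
qed

lemma T_iff: "X \<in> T \<longleftrightarrow> (\<exists>c. X = toep c)"
  using T_toep toep_T by blast

lemma toep_cong: assumes "\<And>m. 1 - int n \<le> m \<Longrightarrow> m \<le> int n - 1 \<Longrightarrow> p dvd a m - b m"
  shows "toep a = toep b"
proof (rule mat_eq_blocks[OF toep_carrier toep_carrier])
  fix i j k l assume "i < n" "j < n" "k < d" "l < d"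
  moreover have "ev (a (int i - int j)) = ev (b (int i - int j))"
    unfolding ev_eq_iff using assms \<open>i < n\<close> \<open>j < n\<close> by simp
  ultimately show "toep a $$ (i*d+k, j*d+l) = toep b $$ (i*d+k, j*d+l)"
    by (simp add: toep_entry)
qed

lemma toep_add: "toep a + toep b = toep (\<lambda>m. a m + b m)"
  by (rule mat_eq_blocks) (auto simp: toep_entry ev_add idx_lt)

lemma toep_smult: "x \<cdot>\<^sub>m toep a = toep (\<lambda>m. Polynomial.smult x (a m))"
  by (rule mat_eq_blocks) (auto simp: toep_entry ev_smult idx_lt)

lemma toep_zero: "toep (\<lambda>m. 0) = 0\<^sub>m (n*d) (n*d)"
  by (rule mat_eq_blocks) (auto simp: toep_entry ev_0 idx_lt)

definition P :: "(int \<Rightarrow> complex poly) \<Rightarrow> (int \<Rightarrow> complex poly) \<Rightarrow> nat \<Rightarrow> nat \<Rightarrow> complex poly" where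
  "P a b i j = (\<Sum>t<n. a (int i - int t) * b (int t - int j))"

lemma sum_block: "(\<Sum>r<n*d. g r) = (\<Sum>t<n. \<Sum>s<d. g (t*d+s))"
proof -
  have sh: "sum g {x..<x+d} = (\<Sum>s<d. g (x+s))" for x
    by (induct d) (simp_all add: add.commute)
  show ?thesis using sum.nat_group[of g d n] by (simp add: sh)
qed

lemma prod_entry: assumes "i < n" "j < n" "k < d" "l < d"
  shows "(toep a * toep b) $$ (i*d+k, j*d+l) = ev (P a b i j) $$ (k,l)"
proof -
  have "(toep a * toep b) $$ (i*d+k, j*d+l) = (\<Sum>r<n*d. toep a $$ (i*d+k, r) * toep b $$ (r, j*d+l))"
    using assms idx_lt[of i k] idx_lt[of j l] by (simp add: scalar_prod_def atLeast0LessThan)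
  also have "\<dots> = (\<Sum>t<n. \<Sum>s<d. toep a $$ (i*d+k, t*d+s) * toep b $$ (t*d+s, j*d+l))"
    by (rule sum_block)
  also have "\<dots> = (\<Sum>t<n. \<Sum>s<d. ev (a (int i - int t)) $$ (k,s) * ev (b (int t - int j)) $$ (s,l))"
    using assms by (intro sum.cong refl) (simp add: toep_entry)
  also have "\<dots> = (\<Sum>t<n. ev (a (int i - int t) * b (int t - int j)) $$ (k,l))"
    using assms by (intro sum.cong refl) (simp add: ev_mult scalar_prod_def atLeast0LessThan)
  also have "\<dots> = ev (P a b i j) $$ (k,l)"
    unfolding P_def using assms by (simp add: ev_sum_entry)
  finally show ?thesis .
qed


lemma P_shift: assumes "Suc i < n" "Suc j < n"
  shows "P a b (Suc i) (Suc j) - P a b i j =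
    a (int i + 1) * b (- (int j + 1)) - a (int i + 1 - int n) * b (int n - (int j + 1))"
proof -
  obtain n' where n': "n = Suc n'" using n2 by (cases n) auto
  have "P a b (Suc i) (Suc j) = a (int i + 1) * b (- (int j + 1))
      + (\<Sum>t<n'. a (int i - int t) * b (int t - int j))"
    unfolding P_def unfolding n' by (subst sum.lessThan_Suc_shift) (simp add: algebra_simps)
  moreover have "P a b i j = (\<Sum>t<n'. a (int i - int t) * b (int t - int j))
      + a (int i + 1 - int n) * b (int n - (int j + 1))"
    unfolding P_def unfolding n' by (simp add: algebra_simps)
  ultimately show ?thesis by simp
qed

definition Tc :: "(int \<Rightarrow> complex poly) \<Rightarrow> (int \<Rightarrow> complex poly) \<Rightarrow> bool" where
  "Tc a b \<longleftrightarrow> (\<forall>i j. 1 \<le> i \<longrightarrow> i \<le> int n - 1 \<longrightarrow> 1 \<le> j \<longrightarrow> j \<le> int n - 1 \<longrightarrow>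
      p dvd a i * b (-j) - a (i - int n) * b (int n - j))"

lemma ev_P_eq: assumes "i < n" "j < n" "i' < n" "j' < n"
  and "\<And>k l. k < d \<Longrightarrow> l < d \<Longrightarrow> (toep a * toep b) $$ (i*d+k, j*d+l) = (toep a * toep b) $$ (i'*d+k, j'*d+l)"
  shows "ev (P a b i j) = ev (P a b i' j')"
  by (rule eq_matI) (use assms in \<open>auto simp: prod_entry[symmetric]\<close>)

lemma prod_T_Tc: assumes "toep a * toep b \<in> T" shows "Tc a b"
  unfolding Tc_def
proof (intro allI impI)
  fix i j :: int assume h: "1 \<le> i" "i \<le> int n - 1" "1 \<le> j" "j \<le> int n - 1"
  obtain c where c: "toep a * toep b = toep c" using T_toep[OF assms] by blast
  define i0 where "i0 = nat i - 1"
  define j0 where "j0 = nat j - 1"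
  have i0: "i = int i0 + 1" "Suc i0 < n" and j0: "j = int j0 + 1" "Suc j0 < n"
    using h unfolding i0_def j0_def by auto
  have "ev (P a b (Suc i0) (Suc j0)) = ev (P a b i0 j0)"
  proof (rule ev_P_eq)
    fix k l assume kl: "k < d" "l < d"
    show "(toep a * toep b) $$ (Suc i0 * d + k, Suc j0 * d + l) = (toep a * toep b) $$ (i0 * d + k, j0 * d + l)"
      using toep_entry[of "Suc i0" "Suc j0" k l c] toep_entry[of i0 j0 k l c] i0 j0 kl by (simp add: c)
  qed (use i0 j0 in simp_all)
  hence "p dvd P a b (Suc i0) (Suc j0) - P a b i0 j0" by (simp add: ev_eq_iff)
  thus "p dvd a i * b (-j) - a (i - int n) * b (int n - j)"
    unfolding P_shift[OF i0(2) j0(2)] using i0 j0 by (simp add: algebra_simps)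
qed

definition Cp :: "(int \<Rightarrow> complex poly) \<Rightarrow> (int \<Rightarrow> complex poly) \<Rightarrow> int \<Rightarrow> complex poly" where
  "Cp a b m = (if m \<ge> 0 then P a b (nat m) 0 else P a b 0 (nat (-m)))"

lemma nat_int_Suc[simp]: "nat (int x + 1) = Suc x" "nat (1 + int x) = Suc x" by simp_all

lemma Tc_P: assumes "Tc a b"
  shows "i < n \<Longrightarrow> j < n \<Longrightarrow> p dvd P a b i j - Cp a b (int i - int j)"
proof (induct i arbitrary: j)
  case 0
  then show ?case by (cases j) (auto simp: Cp_def)
next
  case (Suc i)
  show ?case
  proof (cases j)
    case 0 then show ?thesis by (simp add: Cp_def)
  next
    case (Suc j')
    have ih: "p dvd P a b i j' - Cp a b (int i - int j')" using Suc.hyps Suc.prems Suc by simp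
    have "p dvd P a b (Suc i) (Suc j') - P a b i j'"
    proof -
      have lt: "Suc i < n" "Suc j' < n" using Suc.prems Suc by auto
      have "p dvd a (int i + 1) * b (- (int j' + 1)) - a (int i + 1 - int n) * b (int n - (int j' + 1))"
      proof -
        have H: "\<And>i j. 1 \<le> i \<Longrightarrow> i \<le> int n - 1 \<Longrightarrow> 1 \<le> j \<Longrightarrow> j \<le> int n - 1 \<Longrightarrow>
          p dvd a i * b (-j) - a (i - int n) * b (int n - j)" using assms unfolding Tc_def by blast
        show ?thesis by (rule H) (use lt in auto)
      qed
      thus ?thesis unfolding P_shift[OF lt] .
    qed
    from dvd_add[OF this ih] show ?thesis using Suc by (simp add: algebra_simps)
  qed
qed

lemma Tc_prod: assumes "Tc a b" shows "toep a * toep b = toep (Cp a b)"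
proof (rule mat_eq_blocks)
  fix i j k l assume h: "i < n" "j < n" "k < d" "l < d"
  have "ev (P a b i j) = ev (Cp a b (int i - int j))"
    using Tc_P[OF assms h(1,2)] by (simp add: ev_eq_iff)
  thus "(toep a * toep b) $$ (i*d+k, j*d+l) = toep (Cp a b) $$ (i*d+k, j*d+l)"
    using h by (simp add: prod_entry toep_entry)
qed (simp_all add: mult_carrier_mat[of _ "n*d" "n*d" _ "n*d"])

lemma prod_carrier[simp]: "toep a * toep b \<in> carrier_mat (n*d) (n*d)"
  by (simp add: mult_carrier_mat[of _ "n*d" "n*d" _ "n*d"])


lemma mult_assoc_T: "toep a * toep b * toep c = toep a * (toep b * toep c)"
  by (rule assoc_mult_mat[of _ "n*d" "n*d" _ "n*d" _ "n*d"]) simp_all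

end

locale tp2 = tp +
  fixes sp sm q xi :: "complex poly"
  assumes pf: "p = sp * sm * q"
begin

lemma sp_nz: "sp \<noteq> 0" and sm_nz: "sm \<noteq> 0" using p_nz pf by auto

lemma cancel: "p dvd sp * sm * z \<Longrightarrow> q dvd z"
proof -
  assume "p dvd sp * sm * z"
  hence "(sp * sm) * q dvd (sp * sm) * z" using pf by (simp add: mult.assoc)
  thus "q dvd z" using sp_nz sm_nz by (subst (asm) dvd_times_left_cancel_iff) auto
qed

lemma uncancel: "q dvd z \<Longrightarrow> p dvd sp * sm * z"
  using pf by (simp add: mult_dvd_mono)

definition FB :: "(int \<Rightarrow> complex poly) \<Rightarrow> bool" where
  "FB a \<longleftrightarrow> (\<forall>i. 1 \<le> i \<longrightarrow> i \<le> int n - 1 \<longrightarrow>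
     (\<exists>x y. a i = sp * x \<and> a (i - int n) = sm * y \<and> q dvd x - xi * y))"

definition Dv :: "(int \<Rightarrow> complex poly) \<Rightarrow> bool" where
  "Dv a \<longleftrightarrow> (\<forall>i. 1 \<le> i \<longrightarrow> i \<le> int n - 1 \<longrightarrow> sp dvd a i \<and> sm dvd a (i - int n))"

definition g :: "int \<Rightarrow> complex poly" where
  "g m = (if m = 1 then sp * xi else if m = 1 - int n then sm else 0)"

lemma Pag: assumes "i < n" "j < n"
  shows "P a g i j = (if Suc j < n then a (int i - int j - 1) * (sp * xi) else 0)
                    + (if j = n - 1 then a (int i) * sm else 0)"
proof -
  have "P a g i j = (\<Sum>t<n. (if t = Suc j then a (int i - int j - 1) * (sp * xi) else 0)
          + (if j = n - 1 then (if t = 0 then a (int i) * sm else 0) else 0))"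
    unfolding P_def
  proof (rule sum.cong[OF refl])
    fix t assume "t \<in> {..<n}"
    hence t: "t < n" by simp
    have e1: "int t - int j = 1 \<longleftrightarrow> t = Suc j" by auto
    have e2: "int t - int j = 1 - int n \<longleftrightarrow> (j = n - 1 \<and> t = 0)" using t assms by auto
    show "a (int i - int t) * g (int t - int j) = (if t = Suc j then a (int i - int j - 1) * (sp * xi) else 0)
          + (if j = n - 1 then (if t = 0 then a (int i) * sm else 0) else 0)"
      unfolding g_def using e1 e2 n2 by (auto simp: algebra_simps)
  qed
  also have "\<dots> = (if Suc j < n then a (int i - int j - 1) * (sp * xi) else 0)
                    + (if j = n - 1 then a (int i) * sm else 0)"
    using n2 by (simp add: sum.distrib)
  finally show ?thesis .
qed

lemma Pga: assumes "i < n" "j < n"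
  shows "P g a i j = (if i \<ge> 1 then (sp * xi) * a (int i - 1 - int j) else 0)
                    + (if i = 0 then sm * a (int n - 1 - int j) else 0)"
proof -
  have "P g a i j = (\<Sum>t<n. (if i \<ge> 1 then (if t = i - 1 then (sp * xi) * a (int i - 1 - int j) else 0) else 0)
          + (if i = 0 then (if t = n - 1 then sm * a (int n - 1 - int j) else 0) else 0))"
    unfolding P_def
  proof (rule sum.cong[OF refl])
    fix t assume "t \<in> {..<n}"
    hence t: "t < n" by simp
    have e1: "int i - int t = 1 \<longleftrightarrow> (i \<ge> 1 \<and> t = i - 1)" by auto
    have e2: "int i - int t = 1 - int n \<longleftrightarrow> (i = 0 \<and> t = n - 1)" using t assms by auto
    show "g (int i - int t) * a (int t - int j) = (if i \<ge> 1 then (if t = i - 1 then (sp * xi) * a (int i - 1 - int j) else 0) else 0)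
          + (if i = 0 then (if t = n - 1 then sm * a (int n - 1 - int j) else 0) else 0)"
      unfolding g_def using e1 e2 n2 t by (auto simp: algebra_simps of_nat_diff)
  qed
  also have "\<dots> = (if i \<ge> 1 then (sp * xi) * a (int i - 1 - int j) else 0)
                    + (if i = 0 then sm * a (int n - 1 - int j) else 0)"
    using n2 assms by (simp add: sum.distrib)
  finally show ?thesis .
qed


abbreviation G where "G \<equiv> toep g"

lemma FB_at: assumes "FB a" "1 \<le> i" "i \<le> int n - 1"
  obtains x y where "a i = sp * x" "a (i - int n) = sm * y" "q dvd x - xi * y"
  using assms unfolding FB_def by blast

lemma comm: assumes "FB a" shows "toep a * G = G * toep a"
proof (rule mat_eq_blocks)
  fix i j k l assume h: "i < n" "j < n" "k < d" "l < d"
  have "p dvd P a g i j - P g a i j"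
  proof (cases "i \<ge> 1")
    case True
    show ?thesis
    proof (cases "Suc j < n")
      case True
      then show ?thesis using \<open>i \<ge> 1\<close> h by (simp add: Pag Pga algebra_simps)
    next
      case False
      hence j: "j = n - 1" using h by simp
      obtain x y where xy: "a (int i) = sp * x" "a (int i - int n) = sm * y" "q dvd x - xi * y"
        using FB_at[OF assms, of "int i"] True h by auto
      have "P a g i j - P g a i j = sp * sm * (x - xi * y)"
        using True j n2 h xy by (simp add: Pag Pga algebra_simps of_nat_diff)
      then show ?thesis using uncancel[OF xy(3)] by simp
    qed
  next
    case False
    hence i: "i = 0" by simp
    show ?thesis
    proof (cases "Suc j < n")
      case True
      obtain x y where xy: "a (int n - 1 - int j) = sp * x" "a (int n - 1 - int j - int n) = sm * y" "q dvd x - xi * y"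
        using FB_at[OF assms, of "int n - 1 - int j"] True h by auto
      have jn: "j \<noteq> n - 1" using True by simp
      have "int n - 1 - int j - int n = - int j - 1" by simp
      hence y2: "a (- int j - 1) = sm * y" using xy(2) by metis
      have x2: "a (int n - 1 - int j) = sp * x" using xy(1) by simp
      have "P a g i j - P g a i j = (a (- int j - 1) * (sp * xi)) - sm * a (int n - 1 - int j)"
        using True i jn h by (simp add: Pag Pga)
      also have "\<dots> = - (sp * sm * (x - xi * y))" unfolding y2 x2 by (simp add: algebra_simps)
      finally have "P a g i j - P g a i j = - (sp * sm * (x - xi * y))" .
      then show ?thesis using uncancel[OF xy(3)] by simp
    next
      case False
      hence j: "j = n - 1" using h by simp
      then show ?thesis using i n2 h by (simp add: Pag Pga algebra_simps of_nat_diff)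
    qed
  qed
  hence "ev (P a g i j) = ev (P g a i j)" by (simp add: ev_eq_iff)
  thus "(toep a * G) $$ (i*d+k, j*d+l) = (G * toep a) $$ (i*d+k, j*d+l)"
    using h by (simp add: prod_entry)
qed simp_all

lemma comm_rev: assumes "Dv a" "toep a * G = G * toep a" shows "FB a"
  unfolding FB_def
proof (intro allI impI)
  fix i :: int assume i: "1 \<le> i" "i \<le> int n - 1"
  define i0 where "i0 = nat i"
  have i0: "i = int i0" "i0 < n" "i0 \<ge> 1" using i unfolding i0_def by auto
  obtain x where x: "a i = sp * x" using assms(1) i unfolding Dv_def by (auto elim: dvdE)
  obtain y where y: "a (i - int n) = sm * y" using assms(1) i unfolding Dv_def by (auto elim: dvdE)
  have nn: "n - 1 < n" using n2 by simp
  have "ev (P a g i0 (n-1)) = ev (P g a i0 (n-1))"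
  proof (rule eq_matI)
    fix k l assume "k < dim_row (ev (P g a i0 (n-1)))" "l < dim_col (ev (P g a i0 (n-1)))"
    hence kl: "k < d" "l < d" by simp_all
    show "ev (P a g i0 (n-1)) $$ (k,l) = ev (P g a i0 (n-1)) $$ (k,l)"
      using prod_entry[OF i0(2) nn kl, of a g] prod_entry[OF i0(2) nn kl, of g a] assms(2) by simp
  qed simp_all
  hence "p dvd P a g i0 (n-1) - P g a i0 (n-1)" by (simp add: ev_eq_iff)
  moreover have "P a g i0 (n-1) - P g a i0 (n-1) = sp * sm * (x - xi * y)"
    using i0 nn n2 x y by (simp add: Pag Pga algebra_simps of_nat_diff)
  ultimately have "q dvd x - xi * y" using cancel by simp
  thus "\<exists>x y. a i = sp * x \<and> a (i - int n) = sm * y \<and> q dvd x - xi * y" using x y by blast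
qed

lemma FB_Dv: "FB a \<Longrightarrow> Dv a"
  unfolding FB_def Dv_def by fastforce

lemma Dv_prod: assumes "Dv a" "Dv b" shows "Dv (Cp a b)"
  unfolding Dv_def
proof (intro allI impI conjI)
  fix i :: int assume i: "1 \<le> i" "i \<le> int n - 1"
  have "Cp a b i = (\<Sum>t<n. a (i - int t) * b (int t))"
    using i unfolding Cp_def P_def by simp
  also have "sp dvd \<dots>"
  proof (rule dvd_sum)
    fix t assume "t \<in> {..<n}"
    show "sp dvd a (i - int t) * b (int t)"
    proof (cases "t = 0")
      case True then show ?thesis using assms(1) i unfolding Dv_def by simp
    next
      case False then show ?thesis using assms(2) \<open>t \<in> {..<n}\<close> unfolding Dv_def by auto
    qed
  qed
  finally show "sp dvd Cp a b i" .
  have "Cp a b (i - int n) = (\<Sum>t<n. a (- int t) * b (int t - int (nat (int n - i))))"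
    using i unfolding Cp_def P_def by simp
  also have "sm dvd \<dots>"
  proof (rule dvd_sum)
    fix t assume t: "t \<in> {..<n}"
    show "sm dvd a (- int t) * b (int t - int (nat (int n - i)))"
    proof (cases "t = 0")
      case True then show ?thesis using assms(2) i unfolding Dv_def by simp
    next
      case False
      have H: "\<And>i. 1 \<le> i \<Longrightarrow> i \<le> int n - 1 \<Longrightarrow> sm dvd a (i - int n)"
        using assms(1) unfolding Dv_def by blast
      have "sm dvd a ((int n - int t) - int n)" by (rule H) (use False t in auto)
      then show ?thesis by simp
    qed
  qed
  finally show "sm dvd Cp a b (i - int n)" .
qed

lemma FB_Tc: assumes "FB a" "FB b" shows "Tc a b"
  unfolding Tc_def
proof (intro allI impI)
  fix i j :: int assume h: "1 \<le> i" "i \<le> int n - 1" "1 \<le> j" "j \<le> int n - 1"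
  obtain x y where xy: "a i = sp * x" "a (i - int n) = sm * y" "q dvd x - xi * y"
    using FB_at[OF assms(1) h(1,2)] by blast
  obtain x' y' where xy': "b (int n - j) = sp * x'" "b (int n - j - int n) = sm * y'" "q dvd x' - xi * y'"
    using FB_at[OF assms(2), of "int n - j"] h by auto
  have "q dvd (x - xi * y) * y' - y * (x' - xi * y')"
    using xy(3) xy'(3) by (simp add: dvd_diff)
  hence "p dvd sp * sm * ((x - xi * y) * y' - y * (x' - xi * y'))" by (rule uncancel)
  moreover have "a i * b (-j) - a (i - int n) * b (int n - j) = sp * sm * ((x - xi * y) * y' - y * (x' - xi * y'))"
    using xy xy' by (simp add: algebra_simps)
  ultimately show "p dvd a i * b (-j) - a (i - int n) * b (int n - j)" by simp
qed

lemma FB_prod: assumes "FB a" "FB b" shows "toep a * toep b = toep (Cp a b)" "FB (Cp a b)"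
proof -
  show e: "toep a * toep b = toep (Cp a b)" using Tc_prod[OF FB_Tc[OF assms]] .
  have "toep (Cp a b) * G = toep a * (toep b * G)" unfolding e[symmetric] by (rule mult_assoc_T)
  also have "\<dots> = toep a * (G * toep b)" using comm[OF assms(2)] by simp
  also have "\<dots> = (toep a * G) * toep b" by (rule mult_assoc_T[symmetric])
  also have "\<dots> = G * toep a * toep b" using comm[OF assms(1)] by simp
  also have "\<dots> = G * toep (Cp a b)" unfolding e[symmetric] by (rule mult_assoc_T)
  finally show "FB (Cp a b)" by (rule comm_rev[OF Dv_prod[OF FB_Dv[OF assms(1)] FB_Dv[OF assms(2)]]])
qed


lemma q_eq: "p div (sp * sm) = q"
  using pf sp_nz sm_nz by simp

lemma frakB_char: "frakB n d M p sp sm xi = {toep c | c. FB c}"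
proof
  show "{toep c | c. FB c} \<subseteq> frakB n d M p sp sm xi"
  proof
    fix X assume "X \<in> {toep c | c. FB c}"
    then obtain c where X: "X = toep c" and c: "FB c" by blast
    show "X \<in> frakB n d M p sp sm xi"
      unfolding frakB_def q_eq
    proof (intro CollectI conjI allI impI)
      show "X \<in> T" unfolding X by (rule toep_T)
      fix i :: int assume i: "1 \<le> i \<and> i \<le> int n - 1"
      obtain x y where xy: "c i = sp * x" "c (i - int n) = sm * y" "q dvd x - xi * y"
        using FB_at[OF c, of i] i by auto
      have "tcoef d X i = ev sp * ev x" unfolding X using i xy by (simp add: tcoef_toep ev_mult)
      moreover have "tcoef d X (i - int n) = ev sm * ev y" unfolding X using i xy by (simp add: tcoef_toep ev_mult)
      ultimately show "\<exists>ai aim. tcoef d X i = ev sp * ev ai \<and> tcoef d X (i - int n) = ev sm * ev aim \<and>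
          q dvd ai - xi * aim" using xy(3) by blast
    qed
  qed
next
  show "frakB n d M p sp sm xi \<subseteq> {toep c | c. FB c}"
  proof
    fix X assume X: "X \<in> frakB n d M p sp sm xi"
    hence "X \<in> T" unfolding frakB_def by simp
    then obtain c0 where c0: "X = toep c0" using T_toep by blast
    define R where "R i pr \<longleftrightarrow> tcoef d X i = ev sp * ev (fst pr) \<and> tcoef d X (i - int n) = ev sm * ev (snd pr)
        \<and> q dvd fst pr - xi * snd pr" for i pr
    define ch where "ch i = (SOME pr. R i pr)" for i
    have chR: "R i (ch i)" if "1 \<le> i" "i \<le> int n - 1" for i
    proof -
      have "\<exists>pr. R i pr" using X that unfolding frakB_def q_eq R_def by force
      thus ?thesis unfolding ch_def by (rule someI_ex)
    qed
    define c where "c m = (if 1 \<le> m \<and> m \<le> int n - 1 then sp * fst (ch m)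
       else if 1 - int n \<le> m \<and> m \<le> -1 then sm * snd (ch (m + int n)) else c0 m)" for m
    have FBc: "FB c" unfolding FB_def
    proof (intro allI impI)
      fix i :: int assume i: "1 \<le> i" "i \<le> int n - 1"
      have "c i = sp * fst (ch i)" "c (i - int n) = sm * snd (ch i)" using i unfolding c_def by auto
      moreover have "q dvd fst (ch i) - xi * snd (ch i)" using chR[OF i] unfolding R_def by blast
      ultimately show "\<exists>x y. c i = sp * x \<and> c (i - int n) = sm * y \<and> q dvd x - xi * y" by blast
    qed
    have "toep c = toep c0"
    proof (rule toep_cong)
      fix m assume m: "1 - int n \<le> m" "m \<le> int n - 1"
      have "ev (c m) = ev (c0 m)"
      proof -
        have tc: "tcoef d X m = ev (c0 m)" unfolding c0 using m by (rule tcoef_toep)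
        consider "1 \<le> m" | "m \<le> -1" | "m = 0" by linarith
        then show ?thesis
        proof cases
          case 1
          then show ?thesis using chR[of m] m tc unfolding c_def R_def by (simp add: ev_mult)
        next
          case 2
          have "R (m + int n) (ch (m + int n))" by (rule chR) (use 2 m in auto)
          then show ?thesis using 2 m tc unfolding c_def R_def by (simp add: ev_mult)
        next
          case 3
          then show ?thesis unfolding c_def by simp
        qed
      qed
      thus "p dvd c m - c0 m" by (simp add: ev_eq_iff)
    qed
    thus "X \<in> {toep c | c. FB c}" using FBc c0 by (metis (mono_tags, lifting) mem_Collect_eq)
  qed
qed

lemma FB_subalg: "subalgebra (n*d) {toep c | c. FB c}"
  unfolding subalgebra_def
proof (intro conjI ballI allI)
  show "{toep c | c. FB c} \<subseteq> carrier_mat (n*d) (n*d)" by auto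
  have "FB (\<lambda>m. 0)" unfolding FB_def by (metis dvd_0_right mult_zero_right diff_self)
  thus "0\<^sub>m (n*d) (n*d) \<in> {toep c | c. FB c}" using toep_zero by force
next
  fix A B assume A: "A \<in> {toep c | c. FB c}" and B: "B \<in> {toep c | c. FB c}"
  then obtain a b where ab: "A = toep a" "B = toep b" "FB a" "FB b" by blast
  have "FB (\<lambda>m. a m + b m)" unfolding FB_def
  proof (intro allI impI)
    fix i :: int assume i: "1 \<le> i" "i \<le> int n - 1"
    obtain x y where xy: "a i = sp * x" "a (i - int n) = sm * y" "q dvd x - xi * y"
      using FB_at[OF ab(3) i] by blast
    obtain x' y' where xy': "b i = sp * x'" "b (i - int n) = sm * y'" "q dvd x' - xi * y'"
      using FB_at[OF ab(4) i] by blast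
    have "q dvd (x - xi * y) + (x' - xi * y')" using xy(3) xy'(3) by simp
    hence "q dvd (x + x') - xi * (y + y')" by (simp add: algebra_simps)
    moreover have "a i + b i = sp * (x + x')" "a (i - int n) + b (i - int n) = sm * (y + y')"
      using xy xy' by (simp_all add: algebra_simps)
    ultimately show "\<exists>x y. a i + b i = sp * x \<and> a (i - int n) + b (i - int n) = sm * y \<and> q dvd x - xi * y"
      by blast
  qed
  thus "A + B \<in> {toep c | c. FB c}" using ab toep_add by auto
  show "A * B \<in> {toep c | c. FB c}" using ab FB_prod[OF ab(3,4)] by auto
next
  fix x :: complex and A assume A: "A \<in> {toep c | c. FB c}"
  then obtain a where a: "A = toep a" "FB a" by blast
  have "FB (\<lambda>m. Polynomial.smult x (a m))" unfolding FB_def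
  proof (intro allI impI)
    fix i :: int assume i: "1 \<le> i" "i \<le> int n - 1"
    obtain u y where xy: "a i = sp * u" "a (i - int n) = sm * y" "q dvd u - xi * y"
      using FB_at[OF a(2) i] by blast
    have "q dvd Polynomial.smult x (u - xi * y)" using xy(3) by (simp add: dvd_smult)
    hence "q dvd Polynomial.smult x u - xi * Polynomial.smult x y" by (simp add: algebra_simps smult_diff_right)
    thus "\<exists>u' y'. Polynomial.smult x (a i) = sp * u' \<and> Polynomial.smult x (a (i - int n)) = sm * y' \<and> q dvd u' - xi * y'"
    proof (intro exI conjI)
      show "Polynomial.smult x (a i) = sp * Polynomial.smult x u" using xy by (simp add: mult_smult_right)
      show "Polynomial.smult x (a (i - int n)) = sm * Polynomial.smult x y" using xy by (simp add: mult_smult_right)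
    qed (use \<open>q dvd Polynomial.smult x u - xi * Polynomial.smult x y\<close> in simp)
  qed
  thus "x \<cdot>\<^sub>m A \<in> {toep c | c. FB c}" using a toep_smult by auto
qed


lemma part1:
  assumes TA: "toep b * toep a0 \<in> T" and Db: "Dv b"
    and a1: "p dvd a0 1 - sp * u1" and a2: "p dvd a0 (1 - int n) - sm * u2"
    and gam: "p dvd \<gamma> * u2 - 1" and xi: "xi = u1 * \<gamma>"
  shows "toep b \<in> frakB n d M p sp sm xi"
  unfolding frakB_def q_eq
proof (intro CollectI conjI allI impI)
  show "toep b \<in> T" by (rule toep_T)
  fix i :: int assume i: "1 \<le> i \<and> i \<le> int n - 1"
  obtain x where x: "b i = sp * x" using Db i unfolding Dv_def by (auto elim: dvdE)
  obtain y where y: "b (i - int n) = sm * y" using Db i unfolding Dv_def by (auto elim: dvdE)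
  have tc: "Tc b a0" by (rule prod_T_Tc[OF TA])
  have H: "\<And>i j. 1 \<le> i \<Longrightarrow> i \<le> int n - 1 \<Longrightarrow> 1 \<le> j \<Longrightarrow> j \<le> int n - 1 \<Longrightarrow>
      p dvd b i * a0 (-j) - b (i - int n) * a0 (int n - j)" using tc unfolding Tc_def by blast
  have "p dvd b i * a0 (- (int n - 1)) - b (i - int n) * a0 (int n - (int n - 1))"
    by (rule H) (use i n2 in auto)
  hence h0: "p dvd b i * a0 (1 - int n) - b (i - int n) * a0 1" by simp
  have h1: "p dvd b i * (a0 (1 - int n) - sm * u2)" using a2 by simp
  have h2: "p dvd b (i - int n) * (a0 1 - sp * u1)" using a1 by simp
  have "sp * sm * (x * u2 - y * u1) = (b i * a0 (1 - int n) - b (i - int n) * a0 1)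
      - b i * (a0 (1 - int n) - sm * u2) + b (i - int n) * (a0 1 - sp * u1)"
    using x y by (simp add: algebra_simps)
  hence "p dvd sp * sm * (x * u2 - y * u1)" using h0 h1 h2 by (simp add: dvd_add dvd_diff)
  hence c1: "q dvd x * u2 - y * u1" by (rule cancel)
  have qp: "q dvd p" using pf by simp
  have c2: "q dvd \<gamma> * u2 - 1" using dvd_trans[OF qp gam] .
  have "x - xi * y = \<gamma> * (x * u2 - y * u1) - x * (\<gamma> * u2 - 1)" using xi by (simp add: algebra_simps)
  hence q: "q dvd x - xi * y" using c1 c2 by (simp add: dvd_diff)
  have "tcoef d (toep b) i = ev sp * ev x" using i x by (simp add: tcoef_toep ev_mult)
  moreover have "tcoef d (toep b) (i - int n) = ev sm * ev y" using i y by (simp add: tcoef_toep ev_mult)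
  ultimately show "\<exists>ai aim. tcoef d (toep b) i = ev sp * ev ai \<and> tcoef d (toep b) (i - int n) = ev sm * ev aim \<and>
      q dvd ai - xi * aim" using q by blast
qed


end

locale tp3 = tp +
  fixes S :: "complex mat set"
  assumes maxS: "maximal_subalgebra n d M S"
begin

abbreviation sP where "sP \<equiv> s_plus n d M p S"
abbreviation sM where "sM \<equiv> s_minus n d M p S"

lemma subS: "subalgebra (n*d) S" and ST: "S \<subseteq> T"
  and maxi: "\<And>S'. subalgebra (n*d) S' \<Longrightarrow> S \<subseteq> S' \<Longrightarrow> S' \<subseteq> T \<Longrightarrow> S' = S"
  using maxS unfolding maximal_subalgebra_def by blast+

lemma S_carrier: "B \<in> S \<Longrightarrow> B \<in> carrier_mat (n*d) (n*d)" using subS unfolding subalgebra_def by blast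
lemma S_zero: "0\<^sub>m (n*d) (n*d) \<in> S" using subS unfolding subalgebra_def by blast
lemma S_mult: "A \<in> S \<Longrightarrow> B \<in> S \<Longrightarrow> A * B \<in> S" using subS unfolding subalgebra_def by blast

lemma sP_dvd_p: "sP dvd p" unfolding s_plus_def by (rule Gcd_dvd) simp
lemma sM_dvd_p: "sM dvd p" unfolding s_minus_def by (rule Gcd_dvd) simp
lemma sP_nz: "sP \<noteq> 0" using sP_dvd_p p_nz by auto
lemma sM_nz: "sM \<noteq> 0" using sM_dvd_p p_nz by auto

lemma sP_dvd: "B \<in> S \<Longrightarrow> 1 \<le> j \<Longrightarrow> j \<le> int n - 1 \<Longrightarrow> tcoef d B j = ev b \<Longrightarrow> sP dvd b"
  unfolding s_plus_def by (rule Gcd_dvd) blast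
lemma sM_dvd: "B \<in> S \<Longrightarrow> 1 - int n \<le> j \<Longrightarrow> j \<le> -1 \<Longrightarrow> tcoef d B j = ev b \<Longrightarrow> sM dvd b"
  unfolding s_minus_def by (rule Gcd_dvd) blast

lemma rep_S: assumes "B \<in> S"
  shows "\<exists>b. B = toep b \<and> (\<forall>i. 1 \<le> i \<longrightarrow> i \<le> int n - 1 \<longrightarrow> sP dvd b i \<and> sM dvd b (i - int n))"
proof -
  obtain b where b: "B = toep b" using T_toep assms ST by blast
  have "sP dvd b i \<and> sM dvd b (i - int n)" if "1 \<le> i" "i \<le> int n - 1" for i
  proof
    show "sP dvd b i" by (rule sP_dvd[OF assms that]) (use that in \<open>simp add: b tcoef_toep\<close>)
    show "sM dvd b (i - int n)" by (rule sM_dvd[OF assms, of "i - int n"]) (use that in \<open>simp_all add: b tcoef_toep\<close>)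
  qed
  thus ?thesis using b by blast
qed

definition f where "f = p div sM"
lemma sMf: "sM * f = p" unfolding f_def using sM_dvd_p by simp

definition Ufun :: "(int \<Rightarrow> complex poly) \<Rightarrow> bool" where
  "Ufun c \<longleftrightarrow> (\<forall>m. m \<le> 0 \<longrightarrow> c m = 0) \<and> (\<forall>m. f dvd c m)"

definition Nb :: "(int \<Rightarrow> complex poly) \<Rightarrow> bool" where
  "Nb b \<longleftrightarrow> (\<forall>j. 1 \<le> j \<longrightarrow> j \<le> int n - 1 \<longrightarrow> sM dvd b (-j))"

lemma Ufun_Nb: "Ufun c \<Longrightarrow> Nb c" unfolding Ufun_def Nb_def by simp

lemma p_dvd_sMf: "sM dvd x \<Longrightarrow> f dvd y \<Longrightarrow> p dvd x * y"
  using mult_dvd_mono sMf by metis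

lemma f_dvd_P1: "Ufun c \<Longrightarrow> f dvd P b c i j"
  unfolding P_def Ufun_def by (auto intro!: dvd_sum)

lemma f_dvd_P2: "Ufun c \<Longrightarrow> f dvd P c b i j"
  unfolding P_def Ufun_def by (auto intro!: dvd_sum)

lemma U1: assumes "Nb b" "Ufun c" shows "\<exists>e. Ufun e \<and> toep b * toep c = toep e"
proof -
  have tc: "Tc b c" unfolding Tc_def
  proof (intro allI impI)
    fix i j :: int assume h: "1 \<le> i" "i \<le> int n - 1" "1 \<le> j" "j \<le> int n - 1"
    have "c (-j) = 0" using assms(2) h unfolding Ufun_def by simp
    moreover have "sM dvd b (i - int n)"
    proof -
      have H: "\<And>j. 1 \<le> j \<Longrightarrow> j \<le> int n - 1 \<Longrightarrow> sM dvd b (-j)" using assms(1) unfolding Nb_def by blast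
      have "sM dvd b (- (int n - i))" by (rule H) (use h in auto)
      thus ?thesis by simp
    qed
    moreover have "f dvd c (int n - j)" using assms(2) unfolding Ufun_def by simp
    ultimately show "p dvd b i * c (-j) - b (i - int n) * c (int n - j)"
      using p_dvd_sMf by simp
  qed
  define e where "e m = (if m \<ge> 1 then Cp b c m else 0)" for m
  have "Ufun e" unfolding Ufun_def e_def Cp_def using f_dvd_P1[OF assms(2)] by auto
  moreover have "toep (Cp b c) = toep e"
  proof (rule toep_cong)
    fix m assume m: "1 - int n \<le> m" "m \<le> int n - 1"
    show "p dvd Cp b c m - e m"
    proof (cases "m \<ge> 1")
      case True then show ?thesis unfolding e_def by simp
    next
      case False
      hence "m \<le> 0" by simp
      hence "Cp b c m = (\<Sum>t<n. b (- int t) * c (int t - int (nat (-m))))" unfolding Cp_def P_def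
        by (cases "m = 0") auto
      also have "p dvd \<dots>"
      proof (rule dvd_sum)
        fix t assume t: "t \<in> {..<n}"
        show "p dvd b (- int t) * c (int t - int (nat (-m)))"
        proof (cases "int t - int (nat (-m)) \<le> 0")
          case True then show ?thesis using assms(2) unfolding Ufun_def by simp
        next
          case False
          hence "1 \<le> int t" "int t \<le> int n - 1" using t False \<open>m \<le> 0\<close> by auto
          hence "sM dvd b (- int t)" using assms(1) unfolding Nb_def by simp
          moreover have "f dvd c (int t - int (nat (-m)))" using assms(2) unfolding Ufun_def by simp
          ultimately show ?thesis using p_dvd_sMf by simp
        qed
      qed
      finally show ?thesis using False unfolding e_def by simp
    qed
  qed
  ultimately show ?thesis using Tc_prod[OF tc] by auto
qed

lemma U2: assumes "Nb b" "Ufun c" shows "\<exists>e. Ufun e \<and> toep c * toep b = toep e"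
proof -
  have tc: "Tc c b" unfolding Tc_def
  proof (intro allI impI)
    fix i j :: int assume h: "1 \<le> i" "i \<le> int n - 1" "1 \<le> j" "j \<le> int n - 1"
    have "c (i - int n) = 0" using assms(2) h unfolding Ufun_def by simp
    moreover have "sM dvd b (-j)" using assms(1) h unfolding Nb_def by simp
    moreover have "f dvd c i" using assms(2) unfolding Ufun_def by simp
    ultimately show "p dvd c i * b (-j) - c (i - int n) * b (int n - j)"
      using p_dvd_sMf[of "b (-j)" "c i"] by (simp add: mult.commute)
  qed
  define e where "e m = (if m \<ge> 1 then Cp c b m else 0)" for m
  have "Ufun e" unfolding Ufun_def e_def Cp_def using f_dvd_P2[OF assms(2)] by auto
  moreover have "toep (Cp c b) = toep e"
  proof (rule toep_cong)
    fix m assume m: "1 - int n \<le> m" "m \<le> int n - 1"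
    show "p dvd Cp c b m - e m"
    proof (cases "m \<ge> 1")
      case True then show ?thesis unfolding e_def by simp
    next
      case False
      have P0: "P c b 0 k = 0" for k unfolding P_def using assms(2) unfolding Ufun_def by simp
      have "m \<le> 0" using False by simp
      hence "Cp c b m = 0" unfolding Cp_def using P0 by (cases "m = 0") auto
      thus ?thesis using False unfolding e_def by simp
    qed
  qed
  ultimately show ?thesis using Tc_prod[OF tc] by auto
qed


lemma S_Nb: assumes "B \<in> S" shows "\<exists>b. B = toep b \<and> Nb b"
proof -
  obtain b where b: "B = toep b" and H: "\<forall>i. 1 \<le> i \<longrightarrow> i \<le> int n - 1 \<longrightarrow> sP dvd b i \<and> sM dvd b (i - int n)"
    using rep_S[OF assms] by blast
  have "Nb b" unfolding Nb_def
  proof (intro allI impI)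
    fix j :: int assume j: "1 \<le> j" "j \<le> int n - 1"
    have "sM dvd b ((int n - j) - int n)" using H[rule_format, of "int n - j"] j by simp
    thus "sM dvd b (-j)" by simp
  qed
  thus ?thesis using b by blast
qed

lemma add4: "A \<in> carrier_mat N N \<Longrightarrow> B \<in> carrier_mat N N \<Longrightarrow> C \<in> carrier_mat N N \<Longrightarrow> D \<in> carrier_mat N N \<Longrightarrow>
  (A + B) + (C + D) = (A + C) + (B + (D :: complex mat))"
  by (rule eq_matI) auto

lemma add4': "A \<in> carrier_mat N N \<Longrightarrow> B \<in> carrier_mat N N \<Longrightarrow> C \<in> carrier_mat N N \<Longrightarrow> D \<in> carrier_mat N N \<Longrightarrow>
  (A + B) + (C + D) = A + ((B + C) + (D :: complex mat))"
  by (rule eq_matI) auto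

definition Uset where "Uset = {toep c | c. Ufun c}"
definition S' where "S' = {B + C | B C. B \<in> S \<and> C \<in> Uset}"

lemma Ufun0: "Ufun (\<lambda>m. 0)" unfolding Ufun_def by simp

lemma S'_subalg: "subalgebra (n*d) S'"
  unfolding subalgebra_def
proof (intro conjI ballI allI)
  show "S' \<subseteq> carrier_mat (n*d) (n*d)"
    unfolding S'_def Uset_def using S_carrier by auto
  have "0\<^sub>m (n*d) (n*d) = 0\<^sub>m (n*d) (n*d) + toep (\<lambda>m. 0)" by (simp add: toep_zero)
  thus "0\<^sub>m (n*d) (n*d) \<in> S'" unfolding S'_def Uset_def using S_zero Ufun0 by blast
next
  fix X Y assume X: "X \<in> S'" and Y: "Y \<in> S'"
  then obtain B C B' C' where XY: "X = B + C" "Y = B' + C'" "B \<in> S" "B' \<in> S" "C \<in> Uset" "C' \<in> Uset"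
    unfolding S'_def by blast
  obtain c c' where cc: "C = toep c" "C' = toep c'" "Ufun c" "Ufun c'" using XY unfolding Uset_def by blast
  obtain b b' where bb: "B = toep b" "B' = toep b'" "Nb b" "Nb b'" using S_Nb XY by metis
  have Ssum: "B + B' \<in> S" using subS XY unfolding subalgebra_def by blast
  have "Ufun (\<lambda>m. c m + c' m)" using cc unfolding Ufun_def by simp
  hence Usum: "C + C' \<in> Uset" unfolding Uset_def cc toep_add by blast
  have "X + Y = (B + B') + (C + C')" unfolding XY bb cc by (rule add4[of _ "n*d"]) simp_all
  thus "X + Y \<in> S'" unfolding S'_def using Ssum Usum by blast
  obtain e1 where e1: "Ufun e1" "B * C' = toep e1" using U1[OF bb(3) cc(4)] bb cc by auto
  obtain e2 where e2: "Ufun e2" "C * B' = toep e2" using U2[OF bb(4) cc(3)] bb cc by auto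
  obtain e3 where e3: "Ufun e3" "C * C' = toep e3" using U1[OF Ufun_Nb[OF cc(3)] cc(4)] cc by auto
  have "Ufun (\<lambda>m. (e1 m + e2 m) + e3 m)" using e1 e2 e3 unfolding Ufun_def by simp
  hence Up: "(B * C' + C * B') + C * C' \<in> Uset" unfolding Uset_def e1 e2 e3 toep_add by blast
  have "X * Y = B * (B' + C') + C * (B' + C')" unfolding XY bb cc
    by (rule add_mult_distrib_mat[of _ "n*d" "n*d" _ _ "n*d"]) simp_all
  also have "\<dots> = (B * B' + B * C') + (C * B' + C * C')" unfolding bb cc
    using mult_add_distrib_mat[of "toep b" "n*d" "n*d" "toep b'" "n*d" "toep c'"]
      mult_add_distrib_mat[of "toep c" "n*d" "n*d" "toep b'" "n*d" "toep c'"] by simp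
  also have "\<dots> = B * B' + ((B * C' + C * B') + C * C')" unfolding bb cc
    by (rule add4'[of _ "n*d"]) simp_all
  finally have "X * Y = B * B' + ((B * C' + C * B') + C * C')" .
  moreover have "B * B' \<in> S" using S_mult XY by blast
  ultimately show "X * Y \<in> S'" unfolding S'_def using Up by blast
next
  fix x :: complex and X assume X: "X \<in> S'"
  then obtain B C where XY: "X = B + C" "B \<in> S" "C \<in> Uset" unfolding S'_def by blast
  obtain c where cc: "C = toep c" "Ufun c" using XY unfolding Uset_def by blast
  have "x \<cdot>\<^sub>m B \<in> S" using subS XY unfolding subalgebra_def by blast
  moreover have "Ufun (\<lambda>m. Polynomial.smult x (c m))" using cc unfolding Ufun_def by (simp add: dvd_smult)
  hence "x \<cdot>\<^sub>m C \<in> Uset" unfolding Uset_def cc toep_smult by blast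
  moreover have "x \<cdot>\<^sub>m X = x \<cdot>\<^sub>m B + x \<cdot>\<^sub>m C" unfolding XY cc
    by (rule add_smult_distrib_left_mat[of _ "n*d" "n*d"]) (use S_carrier[OF XY(2)] in auto)
  ultimately show "x \<cdot>\<^sub>m X \<in> S'" unfolding S'_def by blast
qed

lemma S_S': "S \<subseteq> S'"
proof
  fix B assume B: "B \<in> S"
  have "B = B + toep (\<lambda>m. 0)" unfolding toep_zero using S_carrier[OF B] by simp
  thus "B \<in> S'" unfolding S'_def Uset_def using B Ufun0 by blast
qed

lemma S'_T: "S' \<subseteq> T"
proof
  fix X assume "X \<in> S'"
  then obtain B c where X: "X = B + toep c" "B \<in> S" unfolding S'_def Uset_def by blast
  obtain b where "B = toep b" using T_toep X ST by blast
  thus "X \<in> T" unfolding X by (simp add: toep_add toep_T)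
qed

lemma sPsM_dvd: "sP * sM dvd p"
proof -
  have eq: "S' = S" by (rule maxi[OF S'_subalg S_S' S'_T])
  define c1 :: "int \<Rightarrow> complex poly" where "c1 m = (if m = 1 then f else 0)" for m
  have "Ufun c1" unfolding Ufun_def c1_def by simp
  hence "0\<^sub>m (n*d) (n*d) + toep c1 \<in> S'" unfolding S'_def Uset_def using S_zero by blast
  hence "toep c1 \<in> S" using eq by simp
  moreover have "tcoef d (toep c1) 1 = ev f" using n2 by (simp add: tcoef_toep c1_def)
  ultimately have "sP dvd f" using n2 by (intro sP_dvd[of "toep c1" 1]) auto
  hence "sP * sM dvd f * sM" by simp
  thus ?thesis using sMf by (simp add: mult.commute)
qed

end

theorem corollary7p4:
  fixes n d :: nat and M :: "complex mat" and p :: "complex poly" and S :: "complex mat set"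
    and A :: "complex mat" and a_t :: "int \<Rightarrow> complex poly" and \<gamma>1 :: "complex poly"
  assumes "n \<ge> 2" and "d \<ge> 1"
    and "M \<in> carrier_mat d d" and "nonderogatory M" and "is_min_poly M p"
    and "generic_maximal_subalgebra n d M S"
    and "A \<in> S"
    and "\<forall>j. 1 - int n \<le> j \<and> j \<le> int n - 1 \<and> j \<noteq> 0 \<longrightarrow> coprime (a_t j) p"
    and "\<forall>j. 1 \<le> j \<and> j \<le> int n - 1 \<longrightarrow>
           tcoef d A j = poly_mat (s_plus n d M p S) M * poly_mat (a_t j) M"
    and "\<forall>j. 1 - int n \<le> j \<and> j \<le> -1 \<longrightarrow>
           tcoef d A j = poly_mat (s_minus n d M p S) M * poly_mat (a_t j) M"
    and "p dvd \<gamma>1 * a_t (1 - int n) - 1"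
  shows "S = frakB n d M p (s_plus n d M p S) (s_minus n d M p S) (a_t 1 * \<gamma>1)"
proof -
  have maxS: "maximal_subalgebra n d M S" using assms(6) unfolding generic_maximal_subalgebra_def by blast
  interpret tp3 n d M p S by unfold_locales (use assms(1,2,3,5) maxS in auto)
  define q where "q = p div (sP * sM)"
  have pf: "p = sP * sM * q" unfolding q_def using sPsM_dvd by simp
  interpret t2: tp2 n d M p sP sM q "a_t 1 * \<gamma>1" by unfold_locales (rule pf)
  obtain a0 where a0: "A = toep a0" using T_toep ST assms(7) by blast
  have a1: "p dvd a0 1 - sP * a_t 1"
  proof -
    have "ev (a0 1) = ev (sP * a_t 1)"
      using assms(9) tcoef_toep[of 1 a0] n2 a0 by (simp add: ev_mult)
    thus ?thesis by (simp add: ev_eq_iff)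
  qed
  have a2: "p dvd a0 (1 - int n) - sM * a_t (1 - int n)"
  proof -
    have "ev (a0 (1 - int n)) = ev (sM * a_t (1 - int n))"
      using assms(10) tcoef_toep[of "1 - int n" a0] n2 a0 by (simp add: ev_mult)
    thus ?thesis by (simp add: ev_eq_iff)
  qed
  have sub: "S \<subseteq> frakB n d M p sP sM (a_t 1 * \<gamma>1)"
  proof
    fix B assume B: "B \<in> S"
    obtain b where b: "B = toep b" and H: "\<forall>i. 1 \<le> i \<longrightarrow> i \<le> int n - 1 \<longrightarrow> sP dvd b i \<and> sM dvd b (i - int n)"
      using rep_S[OF B] by blast
    have Dv: "t2.Dv b" unfolding t2.Dv_def using H by blast
    have "toep b * toep a0 \<in> T" using S_mult[OF B assms(7)] ST b a0 by auto
    from t2.part1[OF this Dv a1 a2 assms(11) refl] show "B \<in> frakB n d M p sP sM (a_t 1 * \<gamma>1)"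
      using b by simp
  qed
  have sa: "subalgebra (n*d) (frakB n d M p sP sM (a_t 1 * \<gamma>1))"
    unfolding t2.frakB_char by (rule t2.FB_subalg)
  have "frakB n d M p sP sM (a_t 1 * \<gamma>1) \<subseteq> T" unfolding frakB_def by blast
  from maxi[OF sa sub this] show ?thesis by simp
qed

end
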